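(* There is no matching algorithm that is both incentive compatible with rationality (IC-R) and $\alpha$-optimal for some $\alpha>0$, even when the number of features is $|F|=2$.
   Context: An instance consists of: a set $N$ of students; a set $M$ of colleges, each college $c$ with positive integer capacity $x_c$ and strict preference $\succ_c$ over $N$; a finite set $F$ of features; for each student $s$ and feature $f$ a utility function $u_s^f:M\to[0,1]$; for each student $s$ a probability distribution $\mu_s$ over weight vectors $w_s=(w_s^f)_{f\in F}$ with $w_s^f\ge0$, $\sum_f w_s^f=1$, independent across students. Every college is acceptable to every student and vice versa. For realized $w_s$, $c\succeq_s^{w_s}c'$ iff $\sum_f w_s^fu_s^f(c)\ge\sum_f w_s^fu_s^f(c')$, strict version $\succ_s^{w_s}$; $\mathsf{null}$ (unmatched) is ranked below any college. A matching $\pi$ gives each student at most one college and each college $c$ a set $\pi(c)$ of at most $x_c$ students. Given realized weights, $\pi$ is (weakly) stable if there is no pair $(s,c)$ with $c\succ_s^{w_s}\pi(s)$ and either $|\pi(c)|<x_c$ or some $s'\in\pi(c)$ with $s\succ_c s'$. $\mathsf{ProS}(\pi;\mathcal I)$ is the probability over independent $w_s\sim\mu_s$ that $\pi$ is stable. A matching algorithm $\mathsf{Alg}$ is $\alpha$-optimal if $\inf_{\mathcal I}\mathsf{ProS}(\mathsf{Alg}(\mathcal I);\mathcal I)/\max_\pi\mathsf{ProS}(\pi;\mathcal I)\ge\alpha$. Each student $s$ may misreport $(u_s',\mu_s')$ in place of her true $(\{u_s^f\},\mu_s)$; let $\pi(s)$, $\pi'(s)$ be her assignments under truthful report and misreport.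 The algorithm is IC-R if $\Pr[\pi'(s)\succ_s^{w_s}\pi(s)]>1/2$ never occurs (probability over her true $w_s\sim\mu_s$, with true utilities), for any instance, student and misreport. *)

theory Defs
  imports "HOL-Probability.Probability"
begin

record 'f inst =
  stu   :: "nat set"
  col   :: "nat set"
  cap   :: "nat \<Rightarrow> nat"
  cpref :: "nat \<Rightarrow> nat \<Rightarrow> nat \<Rightarrow> bool"  \<comment> \<open>cpref c s s' : s strictly preferred to s' by c\<close>
  util  :: "nat \<Rightarrow> 'f \<Rightarrow> nat \<Rightarrow> real"
  dist  :: "nat \<Rightarrow> (real^'f) measure"

definition wsimplex :: "(real^'f::finite) set" where
  "wsimplex = {w. (\<forall>f. 0 \<le> w $ f) \<and> (\<Sum>f\<in>UNIV. w $ f) = 1}"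

definition valid_dist :: "(real^'f::finite) measure \<Rightarrow> bool" where
  "valid_dist \<mu> \<longleftrightarrow> prob_space \<mu> \<and> sets \<mu> = sets borel \<and> (AE w in \<mu>. w \<in> wsimplex)"

definition strict_total_on :: "nat set \<Rightarrow> (nat \<Rightarrow> nat \<Rightarrow> bool) \<Rightarrow> bool" where
  "strict_total_on A r \<longleftrightarrow>
     (\<forall>a\<in>A. \<not> r a a) \<and>
     (\<forall>a\<in>A. \<forall>b\<in>A. \<forall>c\<in>A. r a b \<longrightarrow> r b c \<longrightarrow> r a c) \<and>
     (\<forall>a\<in>A. \<forall>b\<in>A. a \<noteq> b \<longrightarrow> r a b \<or> r b a)"

definition valid_utils :: "nat set \<Rightarrow> ('f \<Rightarrow> nat \<Rightarrow> real) \<Rightarrow> bool" where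
  "valid_utils M u \<longleftrightarrow> (\<forall>f. \<forall>c\<in>M. 0 \<le> u f c \<and> u f c \<le> 1)"

definition wf_inst :: "('f::finite) inst \<Rightarrow> bool" where
  "wf_inst I \<longleftrightarrow>
     finite (stu I) \<and> finite (col I) \<and>
     (\<forall>c\<in>col I. cap I c > 0) \<and>
     (\<forall>c\<in>col I. strict_total_on (stu I) (cpref I c)) \<and>
     (\<forall>s\<in>stu I. valid_utils (col I) (util I s)) \<and>
     (\<forall>s\<in>stu I. valid_dist (dist I s))"

text \<open>A matching: \<pi> s = None means s is unmatched (null).\<close>
definition matching :: "('f::finite) inst \<Rightarrow> (nat \<Rightarrow> nat option) \<Rightarrow> bool" where
  "matching I \<pi> \<longleftrightarrow>
     (\<forall>s. s \<notin> stu I \<longrightarrow> \<pi> s = None) \<and>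
     (\<forall>s\<in>stu I. \<forall>c. \<pi> s = Some c \<longrightarrow> c \<in> col I) \<and>
     (\<forall>c\<in>col I. card {s\<in>stu I. \<pi> s = Some c} \<le> cap I c)"

definition assigned :: "('f::finite) inst \<Rightarrow> (nat \<Rightarrow> nat option) \<Rightarrow> nat \<Rightarrow> nat set" where
  "assigned I \<pi> c = {s\<in>stu I. \<pi> s = Some c}"

definition val :: "('f::finite \<Rightarrow> nat \<Rightarrow> real) \<Rightarrow> real^'f \<Rightarrow> nat \<Rightarrow> real" where
  "val u w c = (\<Sum>f\<in>UNIV. w $ f * u f c)"

definition sprefers :: "('f::finite \<Rightarrow> nat \<Rightarrow> real) \<Rightarrow> real^'f \<Rightarrow> nat option \<Rightarrow> nat option \<Rightarrow> bool" where
  "sprefers u w a b =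
     (case a of None \<Rightarrow> False
      | Some c \<Rightarrow> (case b of None \<Rightarrow> True | Some c' \<Rightarrow> val u w c > val u w c'))"

definition stable :: "('f::finite) inst \<Rightarrow> (nat \<Rightarrow> nat option) \<Rightarrow> (nat \<Rightarrow> real^'f) \<Rightarrow> bool" where
  "stable I \<pi> w \<longleftrightarrow>
     \<not> (\<exists>s\<in>stu I. \<exists>c\<in>col I.
          sprefers (util I s) (w s) (Some c) (\<pi> s) \<and>
          (card (assigned I \<pi> c) < cap I c \<or> (\<exists>s'\<in>assigned I \<pi> c. cpref I c s s')))"

definition weight_space :: "('f::finite) inst \<Rightarrow> (nat \<Rightarrow> real^'f) measure" where
  "weight_space I = PiM (stu I) (dist I)"

definition ProS :: "(nat \<Rightarrow> nat option) \<Rightarrow> ('f::finite) inst \<Rightarrow> real" where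
  "ProS \<pi> I = measure (weight_space I) {w \<in> space (weight_space I). stable I \<pi> w}"

definition matching_algorithm :: "(('f::finite) inst \<Rightarrow> (nat \<Rightarrow> nat option)) \<Rightarrow> bool" where
  "matching_algorithm Alg \<longleftrightarrow> (\<forall>I. wf_inst I \<longrightarrow> matching I (Alg I))"

definition alpha_optimal :: "(('f::finite) inst \<Rightarrow> (nat \<Rightarrow> nat option)) \<Rightarrow> real \<Rightarrow> bool" where
  "alpha_optimal Alg \<alpha> \<longleftrightarrow>
     (\<forall>I. wf_inst I \<longrightarrow> \<alpha> \<le> ProS (Alg I) I / Max ((\<lambda>\<pi>. ProS \<pi> I) ` {\<pi>. matching I \<pi>}))"

definition misreport :: "('f::finite) inst \<Rightarrow> nat \<Rightarrow> ('f \<Rightarrow> nat \<Rightarrow> real) \<Rightarrow> (real^'f) measure \<Rightarrow> 'f inst" where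
  "misreport I s u' \<mu>' = I\<lparr>util := (util I)(s := u'), dist := (dist I)(s := \<mu>')\<rparr>"

definition IC_R :: "(('f::finite) inst \<Rightarrow> (nat \<Rightarrow> nat option)) \<Rightarrow> bool" where
  "IC_R Alg \<longleftrightarrow>
     (\<forall>I s u' \<mu>'. wf_inst I \<longrightarrow> s \<in> stu I \<longrightarrow> valid_utils (col I) u' \<longrightarrow> valid_dist \<mu>' \<longrightarrow>
        \<not> (measure (dist I s)
              {w \<in> space (dist I s).
                 sprefers (util I s) w (Alg (misreport I s u' \<mu>') s) (Alg I s)} > 1/2))"

end

theory Submission
  imports Defs
begin

lemma cont_val: "continuous_on UNIV (\<lambda>w. val u w c)"
  unfolding val_def by (intro continuous_intros)

lemma wsimplex_closed: "closed (wsimplex :: (real^'f::finite) set)"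
proof -
  have "wsimplex = {w::real^'f. \<forall>f. 0 \<le> w $ f} \<inter> {w. (\<Sum>f\<in>UNIV. w $ f) = 1}"
    unfolding wsimplex_def by auto
  moreover have "closed {w::real^'f. \<forall>f. 0 \<le> w $ f}"
    by (intro closed_Collect_all closed_Collect_le continuous_intros)
  moreover have "closed {w::real^'f. (\<Sum>f\<in>UNIV. w $ f) = 1}"
    by (intro closed_Collect_eq continuous_intros)
  ultimately show ?thesis by (metis closed_Int)
qed

lemma wsimplex_sets: "(wsimplex :: (real^'f::finite) set) \<in> sets borel"
  by (rule borel_closed[OF wsimplex_closed])

definition stabset :: "('f::finite \<Rightarrow> nat \<Rightarrow> real) \<Rightarrow> nat option \<Rightarrow> (real^'f) set" where
  "stabset u oc = {w. \<forall>c\<in>{1,2,3}. \<not> sprefers u w (Some c) oc}"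

lemma stabset_sets: "stabset u oc \<in> sets borel"
proof (cases oc)
  case None
  then have "stabset u oc = {}" by (auto simp: stabset_def sprefers_def)
  then show ?thesis by simp
next
  case (Some k)
  then have "stabset u oc = {w. val u w 1 \<le> val u w k} \<inter> {w. val u w 2 \<le> val u w k} \<inter> {w. val u w 3 \<le> val u w k}"
    by (auto simp: stabset_def sprefers_def not_less)
  moreover have "closed \<dots>"
    by (intro closed_Int closed_Collect_le cont_val)
  ultimately show ?thesis by (simp add: borel_closed)
qed

lemma spref_sets: "{w. sprefers u w a b} \<in> sets borel"
proof (cases a)
  case None then show ?thesis by (simp add: sprefers_def)
next
  case (Some k) then show ?thesis
  proof (cases b)
    case None then show ?thesis using Some by (simp add: sprefers_def)
  next
    case (Some k')
    then have "{w. sprefers u w a b} = {w. val u w k' < val u w k}" using \<open>a = Some k\<close>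
      by (auto simp: sprefers_def)
    moreover have "open \<dots>" by (intro open_Collect_less cont_val)
    ultimately show ?thesis by (simp add: borel_open)
  qed
qed

definition good :: "('f::finite) inst \<Rightarrow> bool" where
  "good J \<longleftrightarrow> stu J = {0} \<and> col J = {1,2,3} \<and> cap J = (\<lambda>_. 1) \<and> cpref J = (\<lambda>_ _ _. False)
     \<and> (\<forall>i. prob_space (dist J i)) \<and> sets (dist J 0) = sets borel"

lemma stable_good:
  assumes "good J"
  shows "stable J \<pi> x \<longleftrightarrow> x 0 \<in> stabset (util J 0) (\<pi> 0)"
proof -
  have as: "assigned J \<pi> c = (if \<pi> 0 = Some c then {0} else {})" for c
    using assms by (auto simp: good_def assigned_def)
  show ?thesis using assms
    by (auto simp: good_def stable_def stabset_def as sprefers_def split: if_splits option.splits)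
qed

lemma ProS_good:
  assumes "good J"
  shows "ProS \<pi> J = measure (dist J 0) (stabset (util J 0) (\<pi> 0))"
proof -
  interpret product_prob_space "dist J" "{0}"
    by (rule product_prob_spaceI) (use assms in \<open>auto simp: good_def\<close>)
  have st: "stu J = {0}" using assms by (simp add: good_def)
  have ss: "stabset (util J 0) (\<pi> 0) \<in> sets (dist J 0)"
    using assms stabset_sets by (simp add: good_def)
  have "ProS \<pi> J = measure (PiM {0} (dist J)) {x \<in> space (PiM {0} (dist J)). x 0 \<in> stabset (util J 0) (\<pi> 0)}"
    unfolding ProS_def weight_space_def st using stable_good[OF assms] st by simp
  also have "\<dots> = measure (dist J 0) (stabset (util J 0) (\<pi> 0))"
    using emeasure_PiM_Collect_single[where i=0 and A="stabset (util J 0) (\<pi> 0)"] ss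
    unfolding measure_def by simp
  finally show ?thesis .
qed


lemma matchings_finite:
  assumes "good J"
  shows "finite {\<pi>. matching J \<pi>}"
proof -
  have "{\<pi>. matching J \<pi>} \<subseteq> (\<lambda>oc x. if x = 0 then oc else None) ` {None, Some 1, Some 2, Some 3}"
  proof
    fix \<pi> assume "\<pi> \<in> {\<pi>. matching J \<pi>}"
    then have m: "matching J \<pi>" by simp
    have "\<pi> = (\<lambda>x. if x = 0 then \<pi> 0 else None)"
    proof (rule ext)
      fix x show "\<pi> x = (if x = 0 then \<pi> 0 else None)"
        using m assms unfolding matching_def good_def by (cases "x = 0") simp_all
    qed
    moreover have "\<pi> 0 \<in> {None, Some 1, Some 2, Some 3}"
      proof (cases "\<pi> 0")
      case (Some c)
      then have "c \<in> col J" using m unfolding matching_def using assms by (simp add: good_def)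
      then show ?thesis using Some assms by (simp add: good_def)
    qed simp
    ultimately show "\<pi> \<in> (\<lambda>oc x. if x = 0 then oc else None) ` {None, Some 1, Some 2, Some 3}"
      by blast
  qed
  then show ?thesis by (rule finite_subset) simp
qed

lemma Max_ge_ProS:
  assumes "good J" "matching J \<pi>"
  shows "ProS \<pi> J \<le> Max ((\<lambda>\<pi>. ProS \<pi> J) ` {\<pi>. matching J \<pi>})"
  using assms matchings_finite[OF assms(1)] by (intro Max_ge) auto

definition wv :: "'f \<Rightarrow> real \<Rightarrow> real^'f::finite" where
  "wv f1 t = (\<chi> f. if f = f1 then t else 1 - t)"

definition uu :: "'f \<Rightarrow> 'f \<Rightarrow> nat \<Rightarrow> real" where
  "uu f1 f c = (if f = f1 then (if c = 1 then 1 else if c = 2 then 3/4 else 0)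
                else (if c = 1 then 0 else if c = 2 then 3/4 else 1))"

lemma sum_two:
  assumes "UNIV = {f1, f2::'f::finite}" "f1 \<noteq> f2"
  shows "sum g UNIV = g f1 + g f2"
  by (subst assms(1)) (simp add: assms(2))

lemma val_wv:
  assumes "UNIV = {f1, f2::'f::finite}" "f1 \<noteq> f2"
  shows "val (uu f1) (wv f1 t) c = (if c = 1 then t else if c = 2 then 3/4 else 1 - t)"
  unfolding val_def sum_two[OF assms] using assms(2) by (auto simp: wv_def uu_def) (simp_all add: field_simps)

lemma wv_simplex:
  assumes "UNIV = {f1, f2::'f::finite}" "f1 \<noteq> f2" "0 \<le> t" "t \<le> 1"
  shows "wv f1 t \<in> wsimplex"
  unfolding wsimplex_def sum_two[OF assms(1,2)] using assms by (auto simp: wv_def)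

lemma wv_inj:
  "wv f1 s = wv f1 t \<longleftrightarrow> s = t"
proof
  assume "wv f1 s = wv f1 t"
  then have "wv f1 s $ f1 = wv f1 t $ f1" by simp
  then show "s = t" by (simp add: wv_def)
qed simp

definition mu :: "'f \<Rightarrow> real \<Rightarrow> (real^'f::finite) measure" where
  "mu f1 e = distr (measure_pmf (pmf_of_list [(wv f1 1, (1-e)/2), (wv f1 (1/2), e), (wv f1 0, (1-e)/2)])) borel id"

lemma wf_list:
  fixes e :: real
  assumes "0 \<le> e" "e \<le> 1"
  shows "pmf_of_list_wf [(wv f1 1, (1-e)/2), (wv f1 (1/2), e), (wv f1 0, (1-e)/2)]"
  using assms by (intro pmf_of_list_wfI) auto

lemma meas_mu:
  fixes e :: real
  assumes "0 \<le> e" "e \<le> 1" "A \<in> sets borel"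
  shows "measure (mu f1 e) A = (if wv f1 1 \<in> A then (1-e)/2 else 0) + (if wv f1 (1/2) \<in> A then e else 0)
     + (if wv f1 0 \<in> A then (1-e)/2 else 0)"
  unfolding mu_def using assms
  by (subst measure_distr) (auto simp: measure_pmf_of_list[OF wf_list[OF assms(1,2)]])

lemma valid_mu:
  assumes "UNIV = {f1, f2::'f::finite}" "f1 \<noteq> f2" "0 \<le> e" "e \<le> 1"
  shows "valid_dist (mu f1 e)"
  unfolding valid_dist_def
proof (intro conjI)
  show "prob_space (mu f1 e)" unfolding mu_def
    by (intro prob_space.prob_space_distr prob_space_measure_pmf) auto
  show "sets (mu f1 e) = sets borel" unfolding mu_def by simp
  have "set_pmf (pmf_of_list [(wv f1 1, (1-e)/2), (wv f1 (1/2), e), (wv f1 0, (1-e)/2)]) \<subseteq> wsimplex"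
    using set_pmf_of_list[OF wf_list[OF assms(3,4)], of f1] wv_simplex[OF assms(1,2)] by auto
  then show "AE w in mu f1 e. w \<in> wsimplex" unfolding mu_def
    by (subst AE_distr_iff) (auto simp: wsimplex_sets AE_measure_pmf_iff)
qed

lemma valid_ret:
  assumes "UNIV = {f1, f2::'f::finite}" "f1 \<noteq> f2"
  shows "valid_dist (return borel (wv f1 (1/2)))"
  using wv_simplex[OF assms, of "1/2"] wsimplex_sets
proof -
  have pr: "Measurable.pred borel (\<lambda>w. w \<in> wsimplex)"
    using wsimplex_sets by (simp add: Measurable.pred_def)
  have "AE w in return borel (wv f1 (1/2)). w \<in> wsimplex"
    by (rule AE_return[THEN iffD2]) (simp_all add: pr wv_simplex[OF assms])
  then show ?thesis
    by (simp add: valid_dist_def prob_space_return)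
qed

definition Inst :: "'f \<Rightarrow> real \<Rightarrow> ('f::finite) inst" where
  "Inst f1 e = \<lparr>stu = {0}, col = {1,2,3}, cap = (\<lambda>_. 1), cpref = (\<lambda>_ _ _. False),
     util = (\<lambda>_. uu f1), dist = (\<lambda>_. mu f1 e)\<rparr>"

lemma valid_uu: "valid_utils M (uu f1)"
  by (auto simp: valid_utils_def uu_def)

lemma wf_Inst:
  assumes "UNIV = {f1, f2::'f::finite}" "f1 \<noteq> f2" "0 \<le> e" "e \<le> 1"
  shows "wf_inst (Inst f1 e)" "good (Inst f1 e)"
  using valid_mu[OF assms] valid_uu[of "{1,2,3}" f1] unfolding valid_dist_def
  by (simp_all add: wf_inst_def Inst_def strict_total_on_def good_def valid_dist_def)

lemma wf_Mis:
  assumes "UNIV = {f1, f2::'f::finite}" "f1 \<noteq> f2" "0 \<le> e" "e \<le> 1"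
  shows "wf_inst (misreport (Inst f1 e) 0 (uu f1) (return borel (wv f1 (1/2))))"
        "good (misreport (Inst f1 e) 0 (uu f1) (return borel (wv f1 (1/2))))"
  using valid_mu[OF assms] valid_uu[of "{1,2,3}" f1] valid_ret[OF assms(1,2)] unfolding valid_dist_def
  by (simp_all add: wf_inst_def Inst_def misreport_def strict_total_on_def good_def valid_dist_def)


theorem theorem2:
  assumes "CARD('f::finite) = 2"
  shows "\<not> (\<exists>(Alg :: 'f inst \<Rightarrow> (nat \<Rightarrow> nat option)) (\<alpha>::real).
             \<alpha> > 0 \<and> matching_algorithm Alg \<and> IC_R Alg \<and> alpha_optimal Alg \<alpha>)"
proof
  assume "\<exists>(Alg :: 'f inst \<Rightarrow> (nat \<Rightarrow> nat option)) (\<alpha>::real).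
             \<alpha> > 0 \<and> matching_algorithm Alg \<and> IC_R Alg \<and> alpha_optimal Alg \<alpha>"
  then obtain Alg :: "'f inst \<Rightarrow> nat \<Rightarrow> nat option" and \<alpha> :: real where
    ap: "\<alpha> > 0" and ma: "matching_algorithm Alg" and ic: "IC_R Alg" and ao: "alpha_optimal Alg \<alpha>"
    by blast
  obtain f1 f2 :: 'f where U: "UNIV = {f1,f2}" and ne: "f1 \<noteq> f2"
    using assms card_2_iff by metis
  define e where "e = min (\<alpha>/8) (1/2)"
  have e0: "0 < e" and e1: "e \<le> 1/2" and e8: "e \<le> \<alpha>/8" using ap by (auto simp: e_def)
  have e0': "0 \<le> e" "e \<le> 1" using e0 e1 by auto
  define I where "I = Inst f1 e"
  define I' where "I' = misreport I 0 (uu f1) (return borel (wv f1 (1/2)))"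
  have wfI: "wf_inst I" and gI: "good I" using wf_Inst[OF U ne e0'] by (auto simp: I_def)
  have wfI': "wf_inst I'" and gI': "good I'" using wf_Mis[OF U ne e0'] by (auto simp: I'_def I_def)
  have utilI: "util I 0 = uu f1" by (simp add: I_def Inst_def)
  have utilI': "util I' 0 = uu f1" by (simp add: I'_def I_def Inst_def misreport_def)
  have distI: "dist I 0 = mu f1 e" by (simp add: I_def Inst_def)
  have distI': "dist I' 0 = return borel (wv f1 (1/2))" by (simp add: I'_def misreport_def)
  have colI: "col I = {1,2,3}" by (simp add: I_def Inst_def)
  have sp: "space (mu f1 e) = UNIV" by (simp add: mu_def)
  note vw = val_wv[OF U ne]

  have mI': "matching I' (Alg I')" using ma wfI' by (simp add: matching_algorithm_def)
  have A: "Alg I' 0 = Some 2"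
  proof (rule ccontr)
    assume nA: "Alg I' 0 \<noteq> Some 2"
    have "wv f1 (1/2) \<notin> stabset (uu f1) (Alg I' 0)"
      using nA by (cases "Alg I' 0") (auto simp: stabset_def sprefers_def vw)
    then have "ProS (Alg I') I' = 0"
      using ProS_good[OF gI'] utilI' distI' measure_return[OF stabset_sets[of "uu f1" "Alg I' 0"], of "wv f1 (1/2)"]
      by simp
    moreover have "\<alpha> \<le> ProS (Alg I') I' / Max ((\<lambda>\<pi>. ProS \<pi> I') ` {\<pi>. matching I' \<pi>})"
      using ao wfI' by (simp add: alpha_optimal_def)
    ultimately show False using ap by simp
  qed

  have mI: "matching I (Alg I)" using ma wfI by (simp add: matching_algorithm_def)
  have icI: "\<not> measure (mu f1 e) {w \<in> space (mu f1 e). sprefers (uu f1) w (Some 2) (Alg I 0)} > 1/2"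
  proof -
    have s0: "0 \<in> stu I" using gI by (simp add: good_def)
    have vu: "valid_utils (col I) (uu f1)" by (rule valid_uu)
    note h = ic[unfolded IC_R_def, rule_format, OF wfI s0 vu valid_ret[OF U ne]]
    show ?thesis using h A utilI distI by (simp add: I'_def[symmetric])
  qed
  have icI': "\<not> measure (mu f1 e) {w. sprefers (uu f1) w (Some 2) (Alg I 0)} > 1/2"
    using icI sp by simp
  show False
  proof (cases "Alg I 0")
    case None
    have "{w. sprefers (uu f1) w (Some 2) (Alg I 0)} = UNIV"
      using None by (simp add: sprefers_def)
    then have "measure (mu f1 e) {w. sprefers (uu f1) w (Some 2) (Alg I 0)} = 1"
      using meas_mu[OF e0', of UNIV f1] by simp
    then show False using icI' by simp
  next
    case (Some k)
    have k: "k \<in> {1,2,3}" using mI Some gI unfolding matching_def good_def by auto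
    have SS: "{w. sprefers (uu f1) w (Some 2) (Alg I 0)} \<in> sets borel" by (rule spref_sets)
    show False
    proof (cases "k = 2")
      case True
      have p2: "ProS (Alg I) I = e"
        using ProS_good[OF gI] utilI distI Some True meas_mu[OF e0' stabset_sets, of f1 "uu f1" "Some 2"]
        by (simp add: stabset_def sprefers_def vw)
      define \<pi>1 where "\<pi>1 = (\<lambda>x::nat. if x = 0 then Some (1::nat) else None)"
      have st: "{s \<in> stu I. \<pi>1 s = Some c} = (if c = 1 then {0} else {})" for c
        using gI unfolding \<pi>1_def good_def by auto
      have m1: "matching I \<pi>1"
        using gI unfolding matching_def st by (auto simp: \<pi>1_def good_def)
      have p1: "ProS \<pi>1 I = (1-e)/2"
        using ProS_good[OF gI] utilI distI meas_mu[OF e0' stabset_sets, of f1 "uu f1" "Some 1"]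
        by (simp add: \<pi>1_def stabset_def sprefers_def vw)
      define Mx where "Mx = Max ((\<lambda>\<pi>. ProS \<pi> I) ` {\<pi>. matching I \<pi>})"
      have Mx: "(1-e)/2 \<le> Mx" using Max_ge_ProS[OF gI m1] p1 by (simp add: Mx_def)
      have "\<alpha> \<le> ProS (Alg I) I / Mx" using ao wfI by (simp add: alpha_optimal_def Mx_def)
      also have "\<dots> = e / Mx" using p2 by simp
      also have "\<dots> \<le> e / ((1-e)/2)"
        using Mx e0 e1 by (intro divide_left_mono) auto
      also have "\<dots> \<le> 4 * e" using e0 e1 by (simp add: field_simps)
      finally show False using e8 ap by simp
    next
      case False
      then have "k = 1 \<or> k = 3" using k by auto
      then have "measure (mu f1 e) {w. sprefers (uu f1) w (Some 2) (Alg I 0)} = e + (1-e)/2"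
        using meas_mu[OF e0' SS] Some by (auto simp: sprefers_def vw)
      moreover have "e + (1-e)/2 > 1/2" using e0 by (simp add: field_simps)
      ultimately show False using icI' by simp
    qed
  qed
qed

end
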